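(* Let $\sigma>0$, $\mu_0\in\mathbb{R}^P$, $Y=\mu_0+W$ with $W\sim\mathcal N(0,\sigma^2\mathrm{Id}_P)$, $\lambda>0$ and $0<\epsilon<2\lambda$. Let $\mathrm{ST}$ be the soft-thresholding, $\mathrm{ST}(y,\lambda)_i=y_i+\lambda$ if $y_i\le-\lambda$, $0$ if $-\lambda<y_i<\lambda$, $y_i-\lambda$ otherwise, and let $$\widehat{\mathrm{df}}^{\mathrm{FD}}(y,\lambda,\epsilon)=\frac1\epsilon\sum_{i=1}^P\big(\mathrm{ST}(y+\epsilon e_i,\lambda)-\mathrm{ST}(y,\lambda)\big)_i.$$ Then the weak gradient $\nabla_2\widehat{\mathrm{df}}^{\mathrm{FD}}(y,\lambda,\epsilon)$ of $\lambda\mapsto\widehat{\mathrm{df}}^{\mathrm{FD}}(y,\lambda,\epsilon)$ satisfies $$\mathbb{E}_W\big[\nabla_2\widehat{\mathrm{df}}^{\mathrm{FD}}(Y,\lambda,\epsilon)\big]=-\frac12\sum_{i=1}^P\frac{\varphi[(\mu_0)_i,\lambda,\epsilon]}{\epsilon},$$ $$\mathbb{V}_W\big[\nabla_2\widehat{\mathrm{df}}^{\mathrm{FD}}(Y,\lambda,\epsilon)\big]=\frac1{2\epsilon}\sum_{i=1}^P\frac{\varphi[(\mu_0)_i,\lambda,\epsilon]}{\epsilon}-\frac14\sum_{i=1}^P\Big[\frac{\varphi[(\mu_0)_i,\lambda,\epsilon]}{\epsilon}\Big]^2,$$ where for $a\in\mathbb{R}$, $$\varphi[a,\lambda,\ep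silon]=\operatorname{erf}\!\Big(\tfrac{a+\lambda+\epsilon}{\sqrt2\sigma}\Big)-\operatorname{erf}\!\Big(\tfrac{a+\lambda}{\sqrt2\sigma}\Big)+\operatorname{erf}\!\Big(\tfrac{a-\lambda+\epsilon}{\sqrt2\sigma}\Big)-\operatorname{erf}\!\Big(\tfrac{a-\lambda}{\sqrt2\sigma}\Big).$$
   Context: $(e_i)$ is the canonical basis of $\mathbb{R}^P$; $\mathbb{E}_W$ and $\mathbb{V}_W$ denote expectation and variance with respect to $W$. The weak derivative of $\mathrm{ST}$ with respect to $\lambda$ is $\partial_\lambda\mathrm{ST}(y,\lambda)_i=0$ if $|y_i|\le\lambda$ and $-\operatorname{sign}(y_i)$ otherwise, so that $\nabla_2\widehat{\mathrm{df}}^{\mathrm{FD}}(y,\lambda,\epsilon)=\frac1\epsilon\sum_i\big(\partial_\lambda\mathrm{ST}(y+\epsilon e_i,\lambda)_i-\partial_\lambda\mathrm{ST}(y,\lambda)_i\big)$. *)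

theory Defs
  imports "HOL-Probability.Probability"
begin

definition erf :: "real \<Rightarrow> real" where
  "erf x = 2 / sqrt pi * (LBINT t=0..x. exp (- (t\<^sup>2)))"

text \<open>Vectors of R^P are functions nat => real, only coordinates i < P matter.\<close>
definition basis_vec :: "nat \<Rightarrow> nat \<Rightarrow> real" where
  "basis_vec i = (\<lambda>j. if j = i then 1 else 0)"

definition ST :: "(nat \<Rightarrow> real) \<Rightarrow> real \<Rightarrow> nat \<Rightarrow> real" where
  "ST y lam i = (if y i \<le> - lam then y i + lam else if y i < lam then 0 else y i - lam)"

definition df_FD :: "nat \<Rightarrow> (nat \<Rightarrow> real) \<Rightarrow> real \<Rightarrow> real \<Rightarrow> real" where
  "df_FD P y lam eps =
     (1 / eps) * (\<Sum>i<P. ST (\<lambda>j. y j + eps * basis_vec i j) lam i - ST y lam i)"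

text \<open>Weak derivative of ST with respect to lambda (as fixed in the paper).\<close>
definition dST_lam :: "(nat \<Rightarrow> real) \<Rightarrow> real \<Rightarrow> nat \<Rightarrow> real" where
  "dST_lam y lam i = (if \<bar>y i\<bar> \<le> lam then 0 else - sgn (y i))"

definition grad2_df_FD :: "nat \<Rightarrow> (nat \<Rightarrow> real) \<Rightarrow> real \<Rightarrow> real \<Rightarrow> real" where
  "grad2_df_FD P y lam eps =
     (1 / eps) * (\<Sum>i<P. dST_lam (\<lambda>j. y j + eps * basis_vec i j) lam i - dST_lam y lam i)"

definition phi_fd :: "real \<Rightarrow> real \<Rightarrow> real \<Rightarrow> real \<Rightarrow> real" where
  "phi_fd \<sigma> a lam eps =
     erf ((a + lam + eps) / (sqrt 2 * \<sigma>)) - erf ((a + lam) / (sqrt 2 * \<sigma>))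
   + erf ((a - lam + eps) / (sqrt 2 * \<sigma>)) - erf ((a - lam) / (sqrt 2 * \<sigma>))"

definition gauss_noise :: "nat \<Rightarrow> real \<Rightarrow> (nat \<Rightarrow> real) measure" where
  "gauss_noise P \<sigma> = PiM {..<P} (\<lambda>_. density lborel (normal_density 0 \<sigma>))"

end

theory Submission
  imports Defs
begin


lemma erf_deriv: "(erf has_real_derivative (2 / sqrt pi * exp (- (x\<^sup>2)))) (at x)"
proof -
  define a where "a = min 0 x - 1"
  define b where "b = max 0 x + 1"
  have c: "continuous_on {a..b} (\<lambda>t::real. exp (- (t\<^sup>2)))"
    by (intro continuous_intros)
  have "((\<lambda>u. LBINT y=ereal 0..u. exp (- (y\<^sup>2))) has_vector_derivative (exp (- (x\<^sup>2)))) (at x within {a..b})"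
    by (rule interval_integral_FTC2[OF _ _ c]) (auto simp: a_def b_def)
  then have "((\<lambda>u. LBINT y=0..u. exp (- (y\<^sup>2))) has_vector_derivative (exp (- (x\<^sup>2)))) (at x within {a..b})"
    by (simp add: zero_ereal_def)
  then have "((\<lambda>u. LBINT y=0..u. exp (- (y\<^sup>2))) has_vector_derivative (exp (- (x\<^sup>2)))) (at x within {a<..<b})"
    by (rule has_vector_derivative_within_subset) auto
  then have "((\<lambda>u. LBINT y=0..u. exp (- (y\<^sup>2))) has_vector_derivative (exp (- (x\<^sup>2)))) (at x)"
    by (subst (asm) has_vector_derivative_within_open) (auto simp: a_def b_def)
  then have "((\<lambda>u. LBINT y=0..u. exp (- (y\<^sup>2))) has_real_derivative (exp (- (x\<^sup>2)))) (at x)"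
    by (simp add: has_real_derivative_iff_has_vector_derivative)
  then show ?thesis unfolding erf_def[abs_def]
    by (intro derivative_eq_intros) auto
qed

lemma erf_0: "erf 0 = 0" by (simp add: erf_def zero_ereal_def)

lemma erf_odd: "erf (- x) = - erf x"
proof -
  have "\<forall>y. ((\<lambda>x. erf (- x) + erf x) has_real_derivative 0) (at y)"
  proof
    fix y :: real
    have "((\<lambda>x. erf (- x) + erf x) has_real_derivative
       (2 / sqrt pi * exp (- ((-y)\<^sup>2))) * (-1) + 2 / sqrt pi * exp (- (y\<^sup>2))) (at y)"
    proof -
      have d1: "((\<lambda>x. erf (- x)) has_real_derivative (2 / sqrt pi * exp (- ((-y)\<^sup>2))) * (-1)) (at y)"
        by (rule DERIV_chain2[OF erf_deriv]) (auto intro!: derivative_eq_intros)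
      show ?thesis by (rule DERIV_add[OF d1 erf_deriv])
    qed
    then show "((\<lambda>x. erf (- x) + erf x) has_real_derivative 0) (at y)" by simp
  qed
  from DERIV_isconst_all[OF this, of x 0] show ?thesis by (simp add: erf_0)
qed

lemma nd_eq:
  assumes "\<sigma> > 0"
  shows "2 / sqrt pi * exp (- ((x / (sqrt 2 * \<sigma>))\<^sup>2)) * (1 / (sqrt 2 * \<sigma>)) / 2
         = normal_density 0 \<sigma> x"
proof -
  have s: "sqrt (2 * pi * \<sigma>\<^sup>2) = sqrt 2 * sqrt pi * \<sigma>"
    using assms by (simp add: real_sqrt_mult)
  have e: "(x / (sqrt 2 * \<sigma>))\<^sup>2 = x\<^sup>2 / (2 * \<sigma>\<^sup>2)"
    by (simp add: power_divide power_mult_distrib)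
  have "\<sigma> \<noteq> 0" using assms by simp
  show ?thesis unfolding normal_density_def s e
    using \<open>\<sigma> \<noteq> 0\<close> by (simp add: field_simps)
qed

lemma gauss_F_deriv:
  assumes "\<sigma> > 0"
  shows "((\<lambda>x. erf (x / (sqrt 2 * \<sigma>)) / 2) has_real_derivative normal_density 0 \<sigma> x) (at x)"
proof -
  have "((\<lambda>x. erf (x / (sqrt 2 * \<sigma>))) has_real_derivative
     2 / sqrt pi * exp (- ((x / (sqrt 2 * \<sigma>))\<^sup>2)) * (1 / (sqrt 2 * \<sigma>))) (at x)"
    by (rule DERIV_chain2[OF erf_deriv]) (use assms in \<open>auto intro!: derivative_eq_intros\<close>)
  then have "((\<lambda>x. erf (x / (sqrt 2 * \<sigma>)) / 2) has_real_derivative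
     2 / sqrt pi * exp (- ((x / (sqrt 2 * \<sigma>))\<^sup>2)) * (1 / (sqrt 2 * \<sigma>)) / 2) (at x)"
    by (intro derivative_eq_intros) auto
  then show ?thesis using nd_eq[OF assms] by simp
qed

lemma gauss_LBINT:
  assumes "\<sigma> > 0"
  shows "(LBINT x=l..u. normal_density 0 \<sigma> x) = erf (u / (sqrt 2 * \<sigma>)) / 2 - erf (l / (sqrt 2 * \<sigma>)) / 2"
proof (rule interval_integral_FTC_finite)
  show "continuous_on {min l u..max l u} (normal_density 0 \<sigma>)"
    unfolding normal_density_def using assms by (intro continuous_intros) auto
  fix x
  show "((\<lambda>x. erf (x / (sqrt 2 * \<sigma>)) / 2) has_vector_derivative normal_density 0 \<sigma> x) (at x within {min l u..max l u})"
    using gauss_F_deriv[OF assms, of x]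
    by (simp add: has_real_derivative_iff_has_vector_derivative has_vector_derivative_at_within)
qed

lemma gauss_Ioc:
  assumes "\<sigma> > 0" "l \<le> u"
  shows "(\<integral>x. indicat_real {l<..u} x \<partial>density lborel (normal_density 0 \<sigma>)) =
     erf (u / (sqrt 2 * \<sigma>)) / 2 - erf (l / (sqrt 2 * \<sigma>)) / 2"
proof -
  have "(\<integral>x. indicat_real {l<..u} x \<partial>density lborel (normal_density 0 \<sigma>)) =
     (\<integral>x. normal_density 0 \<sigma> x *\<^sub>R indicat_real {l<..u} x \<partial>lborel)"
    by (rule integral_density) auto
  also have "\<dots> = (LBINT x:{l<..u}. normal_density 0 \<sigma> x)"
    by (simp add: set_lebesgue_integral_def mult.commute)
  also have "\<dots> = (LBINT x=l..u. normal_density 0 \<sigma> x)"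
    using assms by (simp add: interval_integral_Ioc)
  finally show ?thesis using gauss_LBINT[OF assms(1)] by simp
qed

lemma gauss_Ico:
  assumes "\<sigma> > 0" "l \<le> u"
  shows "(\<integral>x. indicat_real {l..<u} x \<partial>density lborel (normal_density 0 \<sigma>)) =
     erf (u / (sqrt 2 * \<sigma>)) / 2 - erf (l / (sqrt 2 * \<sigma>)) / 2"
proof -
  have "(\<integral>x. indicat_real {l..<u} x \<partial>density lborel (normal_density 0 \<sigma>)) =
     (\<integral>x. normal_density 0 \<sigma> x *\<^sub>R indicat_real {l..<u} x \<partial>lborel)"
    by (rule integral_density) auto
  also have "\<dots> = (LBINT x:{l..<u}. normal_density 0 \<sigma> x)"
    by (simp add: set_lebesgue_integral_def mult.commute)
  also have "\<dots> = (LBINT x=l..u. normal_density 0 \<sigma> x)"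
    using assms by (simp add: interval_integral_Ico)
  finally show ?thesis using gauss_LBINT[OF assms(1)] by simp
qed

abbreviation "NN \<sigma> \<equiv> density lborel (normal_density 0 \<sigma>)"

lemma NN_prob: "\<sigma> > 0 \<Longrightarrow> prob_space (NN \<sigma>)" by (rule prob_space_normal_density)

lemma NN_psf: "\<sigma> > 0 \<Longrightarrow> product_sigma_finite (\<lambda>_::nat. NN \<sigma>)"
proof -
  assume "\<sigma> > 0"
  interpret prob_space "NN \<sigma>" by (rule NN_prob) fact
  show ?thesis unfolding product_sigma_finite_def by (auto intro: sigma_finite_measure_axioms)
qed

lemma pi_single:
  fixes h :: "real \<Rightarrow> real" and I :: "nat set"
  assumes "\<sigma> > 0" "finite I" "k \<in> I" "integrable (NN \<sigma>) h"
  shows "(\<integral>w. h (w k) \<partial>PiM I (\<lambda>_. NN \<sigma>)) = integral\<^sup>L (NN \<sigma>) h"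
proof -
  interpret product_sigma_finite "\<lambda>_::nat. NN \<sigma>" by (rule NN_psf) fact
  interpret prob_space "NN \<sigma>" by (rule NN_prob) fact
  define f where "f = (\<lambda>j::nat. if j = k then h else (\<lambda>_. 1::real))"
  have "(\<integral>w. (\<Prod>j\<in>I. f j (w j)) \<partial>PiM I (\<lambda>_. NN \<sigma>)) = (\<Prod>j\<in>I. integral\<^sup>L (NN \<sigma>) (f j))"
    by (rule product_integral_prod) (use assms in \<open>auto simp: f_def\<close>)
  moreover have "\<And>w. (\<Prod>j\<in>I. f j (w j)) = h (w k)"
  proof -
    fix w :: "nat \<Rightarrow> real"
    have "\<And>j. f j (w j) = (if j = k then h (w j) else 1)" by (simp add: f_def)
    then show "(\<Prod>j\<in>I. f j (w j)) = h (w k)" using assms by (simp add: prod.delta')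
  qed
  moreover have "(\<Prod>j\<in>I. integral\<^sup>L (NN \<sigma>) (f j)) = integral\<^sup>L (NN \<sigma>) h"
    using assms prob_space[simplified] by (simp add: f_def if_distrib prod.delta' cong: if_cong)
  ultimately show ?thesis by simp
qed

lemma pi_pair:
  fixes h1 h2 :: "real \<Rightarrow> real" and I :: "nat set"
  assumes "\<sigma> > 0" "finite I" "k \<in> I" "l \<in> I" "k \<noteq> l" "integrable (NN \<sigma>) h1" "integrable (NN \<sigma>) h2"
  shows "(\<integral>w. h1 (w k) * h2 (w l) \<partial>PiM I (\<lambda>_. NN \<sigma>)) = integral\<^sup>L (NN \<sigma>) h1 * integral\<^sup>L (NN \<sigma>) h2"
proof -
  interpret product_sigma_finite "\<lambda>_::nat. NN \<sigma>" by (rule NN_psf) fact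
  interpret prob_space "NN \<sigma>" by (rule NN_prob) fact
  define f where "f = (\<lambda>j::nat. if j = k then h1 else if j = l then h2 else (\<lambda>_. 1::real))"
  have "(\<integral>w. (\<Prod>j\<in>I. f j (w j)) \<partial>PiM I (\<lambda>_. NN \<sigma>)) = (\<Prod>j\<in>I. integral\<^sup>L (NN \<sigma>) (f j))"
    by (rule product_integral_prod) (use assms in \<open>auto simp: f_def\<close>)
  moreover have "\<And>g :: nat \<Rightarrow> real. (\<Prod>j\<in>I. g j) = g k * g l * (\<Prod>j\<in>I - {k, l}. g j)"
  proof -
    fix g :: "nat \<Rightarrow> real"
    have "(\<Prod>j\<in>I. g j) = g k * (\<Prod>j\<in>I - {k}. g j)"
      using assms by (simp add: prod.remove)
    also have "(\<Prod>j\<in>I - {k}. g j) = g l * (\<Prod>j\<in>I - {k} - {l}. g j)"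
      using assms by (subst prod.remove[of _ l]) auto
    finally show "(\<Prod>j\<in>I. g j) = g k * g l * (\<Prod>j\<in>I - {k, l}. g j)"
      by (simp add: Diff_insert2[symmetric] mult.assoc insert_commute)
  qed
  moreover have "\<And>w. (\<Prod>j\<in>I - {k, l}. f j (w j)) = 1" "(\<Prod>j\<in>I - {k, l}. integral\<^sup>L (NN \<sigma>) (f j)) = 1"
    using prob_space[simplified] by (auto simp: f_def intro!: prod.neutral)
  ultimately show ?thesis using assms by (simp add: f_def)
qed



definition gf :: "real \<Rightarrow> real \<Rightarrow> real \<Rightarrow> real \<Rightarrow> real" where
  "gf lam eps a x = indicat_real {-lam-eps-a..<-lam-a} x + indicat_real {lam-eps-a<..lam-a} x"

lemma gf_meas[measurable]: "gf lam eps a \<in> borel_measurable borel"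
  unfolding gf_def[abs_def] by measurable

lemma gf_01: "0 < eps \<Longrightarrow> eps < 2 * lam \<Longrightarrow> gf lam eps a x = 0 \<or> gf lam eps a x = 1"
  unfolding gf_def by (auto simp: indicator_def)

lemma gf_bound: "0 < eps \<Longrightarrow> eps < 2 * lam \<Longrightarrow> \<bar>gf lam eps a x\<bar> \<le> 1"
  using gf_01[of eps lam a x] by auto

lemma dst_diff:
  assumes "0 < eps" "eps < 2 * lam"
  shows "(if \<bar>a + x + eps\<bar> \<le> lam then 0 else - sgn (a + x + eps)) - (if \<bar>a + x\<bar> \<le> lam then 0 else - sgn (a + x))
     = - gf lam eps a x"
  using assms unfolding gf_def by (auto simp: indicator_def sgn_if abs_if)

lemma G_eq:
  assumes "0 < eps" "eps < 2 * lam"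
  shows "grad2_df_FD P (\<lambda>i. \<mu>0 i + w i) lam eps = - (1 / eps) * (\<Sum>i<P. gf lam eps (\<mu>0 i) (w i))"
proof -
  have "\<And>i. dST_lam (\<lambda>j. (\<mu>0 j + w j) + eps * basis_vec i j) lam i - dST_lam (\<lambda>i. \<mu>0 i + w i) lam i
      = - gf lam eps (\<mu>0 i) (w i)"
  proof -
    fix i
    show "dST_lam (\<lambda>j. (\<mu>0 j + w j) + eps * basis_vec i j) lam i - dST_lam (\<lambda>i. \<mu>0 i + w i) lam i
      = - gf lam eps (\<mu>0 i) (w i)"
      unfolding dST_lam_def basis_vec_def
      by (simp only: refl if_True mult_1_right) (rule dst_diff[OF assms])
  qed
  then show ?thesis unfolding grad2_df_FD_def by (simp add: sum_negf)
qed

lemma gf_int: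
  assumes "\<sigma> > 0" "0 < eps" "eps < 2 * lam"
  shows "integral\<^sup>L (NN \<sigma>) (gf lam eps a) = phi_fd \<sigma> a lam eps / 2"
proof -
  interpret prob_space "NN \<sigma>" by (rule NN_prob) fact
  define s where "s = sqrt 2 * \<sigma>"
  have s0: "s \<noteq> 0" using assms by (simp add: s_def)
  have i1: "integrable (NN \<sigma>) (indicat_real {-lam-eps-a..<-lam-a})"
    by (intro integrable_real_indicator) (auto simp: less_top[symmetric])
  have i2: "integrable (NN \<sigma>) (indicat_real {lam-eps-a<..lam-a})"
    by (intro integrable_real_indicator) (auto simp: less_top[symmetric])
  have "integral\<^sup>L (NN \<sigma>) (gf lam eps a) = (\<integral>x. indicat_real {-lam-eps-a..<-lam-a} x \<partial>NN \<sigma>)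
     + (\<integral>x. indicat_real {lam-eps-a<..lam-a} x \<partial>NN \<sigma>)"
    unfolding gf_def by (rule Bochner_Integration.integral_add[OF i1 i2])
  also have "\<dots> = (erf ((-lam-a) / s) / 2 - erf ((-lam-eps-a) / s) / 2)
      + (erf ((lam-a) / s) / 2 - erf ((lam-eps-a) / s) / 2)"
    unfolding s_def using assms
    by (simp only: gauss_Ico[OF assms(1)] gauss_Ioc[OF assms(1)])
  also have "(-lam-a) / s = - ((a + lam) / s)" by (simp only: minus_divide_left) (simp add: algebra_simps)
  also have "(-lam-eps-a) / s = - ((a + lam + eps) / s)" by (simp only: minus_divide_left) (simp add: algebra_simps)
  also have "(lam-a) / s = - ((a - lam) / s)" by (simp only: minus_divide_left) (simp add: algebra_simps)
  also have "(lam-eps-a) / s = - ((a - lam + eps) / s)" by (simp only: minus_divide_left) (simp add: algebra_simps)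
  finally show ?thesis unfolding phi_fd_def s_def[symmetric] erf_odd by simp
qed



lemma gf_measNN[measurable]: "gf lam eps a \<in> borel_measurable (NN \<sigma>)"
  by simp

lemma X_bdd: "0 < eps \<Longrightarrow> eps < 2 * lam \<Longrightarrow> \<bar>gf lam eps a x - c\<bar> \<le> 1 + \<bar>c\<bar>"
  using gf_bound[of eps lam a x] by linarith

lemma XX_bdd: "0 < eps \<Longrightarrow> eps < 2 * lam \<Longrightarrow>
   \<bar>(gf lam eps a x - c) * (gf lam eps b y - d)\<bar> \<le> (1 + \<bar>c\<bar>) * (1 + \<bar>d\<bar>)"
  unfolding abs_mult by (intro mult_mono X_bdd) auto

lemma sq_gf: "0 < eps \<Longrightarrow> eps < 2 * lam \<Longrightarrow>
   (gf lam eps a x - c) * (gf lam eps a x - c) = (1 - 2 * c) * gf lam eps a x + c\<^sup>2"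
  using gf_01[of eps lam a x] by (auto simp: power2_eq_square algebra_simps)

theorem lemma1:
  fixes P :: nat and \<sigma> lam eps :: real and \<mu>0 :: "nat \<Rightarrow> real"
  assumes "\<sigma> > 0" and "lam > 0" and "0 < eps" and "eps < 2 * lam"
  defines "G \<equiv> (\<lambda>w. grad2_df_FD P (\<lambda>i. \<mu>0 i + w i) lam eps)"
  shows "(\<integral>w. G w \<partial>gauss_noise P \<sigma>) = - (1/2) * (\<Sum>i<P. phi_fd \<sigma> (\<mu>0 i) lam eps / eps)
    \<and> (\<integral>w. (G w - (\<integral>v. G v \<partial>gauss_noise P \<sigma>))\<^sup>2 \<partial>gauss_noise P \<sigma>)
           = 1 / (2 * eps) * (\<Sum>i<P. phi_fd \<sigma> (\<mu>0 i) lam eps / eps)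
             - (1/4) * (\<Sum>i<P. (phi_fd \<sigma> (\<mu>0 i) lam eps / eps)\<^sup>2)"
proof -
  note e = assms(3,4)
  define M where "M = PiM {..<P} (\<lambda>_::nat. NN \<sigma>)"
  have gn: "gauss_noise P \<sigma> = M" by (simp add: gauss_noise_def M_def)
  interpret NP: prob_space "NN \<sigma>" by (rule NN_prob) fact
  interpret PP: prob_space M unfolding M_def by (rule prob_space_PiM) (rule NN_prob[OF assms(1)])
  define p where "p i = phi_fd \<sigma> (\<mu>0 i) lam eps / 2" for i
  define g where "g i = gf lam eps (\<mu>0 i)" for i
  have Gw: "G w = - (1 / eps) * (\<Sum>i<P. g i (w i))" for w
    unfolding G_def g_def by (rule G_eq[OF e])
  have gmeas[measurable]: "g i \<in> borel_measurable (NN \<sigma>)" for i unfolding g_def by simp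
  have intN: "integrable (NN \<sigma>) (\<lambda>x. g i x - c)" for i c
    by (rule NP.integrable_const_bound[where B="1 + \<bar>c\<bar>"]) (auto simp: g_def X_bdd[OF e])
  have intNg: "integrable (NN \<sigma>) (g i)" for i
    by (rule NP.integrable_const_bound[where B="1"]) (auto simp: g_def gf_bound[OF e])
  have intNsq: "integrable (NN \<sigma>) (\<lambda>x. (g i x - c) * (g i x - c))" for i c
  proof (rule NP.integrable_const_bound[where B="(1 + \<bar>c\<bar>) * (1 + \<bar>c\<bar>)"])
    show "AE x in NN \<sigma>. norm ((g i x - c) * (g i x - c)) \<le> (1 + \<bar>c\<bar>) * (1 + \<bar>c\<bar>)"
      by (intro AE_I2) (unfold real_norm_def g_def, rule XX_bdd[OF e])
  qed simp
  have compmeas: "(\<lambda>w. w i) \<in> measurable M (NN \<sigma>)" if "i < P" for i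
    unfolding M_def using that by (intro measurable_component_singleton) auto
  have intM1: "integrable M (\<lambda>w. g i (w i))" if "i < P" for i
    by (rule PP.integrable_const_bound[where B="1"])
      (auto simp: g_def gf_bound[OF e] intro!: measurable_compose[OF compmeas[OF that] gmeas[unfolded g_def]])
  have intM2: "integrable M (\<lambda>w. (g i (w i) - p i) * (g j (w j) - p j))" if "i < P" "j < P" for i j
    by (rule PP.integrable_const_bound[where B="(1 + \<bar>p i\<bar>) * (1 + \<bar>p j\<bar>)"])
      (auto simp: g_def XX_bdd[OF e]
       intro!: borel_measurable_times borel_measurable_diff
         measurable_compose[OF compmeas[OF that(1)] gmeas[unfolded g_def]]
         measurable_compose[OF compmeas[OF that(2)] gmeas[unfolded g_def]])
  have Eg: "(\<integral>w. g i (w i) \<partial>M) = p i" if "i < P" for i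
    unfolding M_def using that
    by (subst pi_single[OF assms(1)]) (use intNg[of i, unfolded g_def] in \<open>auto simp: g_def p_def gf_int[OF assms(1) e]\<close>)
  have EG: "(\<integral>w. G w \<partial>M) = - (1 / eps) * (\<Sum>i<P. p i)"
    unfolding Gw using intM1 Eg by (simp add: integral_sum)
  have part1: "- (1 / eps) * (\<Sum>i<P. p i) = - (1/2) * (\<Sum>i<P. phi_fd \<sigma> (\<mu>0 i) lam eps / eps)"
    unfolding p_def by (simp add: sum_divide_distrib[symmetric])
  have EXX: "(\<integral>w. (g i (w i) - p i) * (g j (w j) - p j) \<partial>M) = (if i = j then p i - (p i)\<^sup>2 else 0)"
    if "i < P" "j < P" for i j
  proof (cases "i = j")
    case True
    have "(\<integral>w. (g i (w i) - p i) * (g i (w i) - p i) \<partial>M) = (\<integral>x. (g i x - p i) * (g i x - p i) \<partial>NN \<sigma>)"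
      unfolding M_def using that by (intro pi_single[OF assms(1)] intNsq) auto
    also have "\<dots> = (\<integral>x. (1 - 2 * p i) * g i x + (p i)\<^sup>2 \<partial>NN \<sigma>)"
      unfolding g_def by (simp add: sq_gf[OF e])
    also have "\<dots> = (1 - 2 * p i) * p i + (p i)\<^sup>2"
      using intNg[of i] NP.prob_space[simplified] by (simp add: g_def p_def gf_int[OF assms(1) e])
    also have "\<dots> = p i - (p i)\<^sup>2" by (simp add: algebra_simps power2_eq_square)
    finally show ?thesis using True by simp
  next
    case False
    have "(\<integral>w. (g i (w i) - p i) * (g j (w j) - p j) \<partial>M)
        = (\<integral>x. g i x - p i \<partial>NN \<sigma>) * (\<integral>x. g j x - p j \<partial>NN \<sigma>)"
      unfolding M_def using that False by (intro pi_pair[OF assms(1)] intN) auto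
    also have "(\<integral>x. g i x - p i \<partial>NN \<sigma>) = 0"
      using intNg[of i] NP.prob_space[simplified] by (simp add: g_def p_def gf_int[OF assms(1) e])
    finally show ?thesis using False by simp
  qed
  have sqexp: "(G w - (\<integral>v. G v \<partial>M))\<^sup>2 = (1 / eps)\<^sup>2 * (\<Sum>i<P. \<Sum>j<P. (g i (w i) - p i) * (g j (w j) - p j))" for w
  proof -
    have "G w - (\<integral>v. G v \<partial>M) = - (1 / eps) * (\<Sum>i<P. g i (w i) - p i)"
      unfolding EG unfolding Gw by (simp add: sum_subtractf algebra_simps)
    then have "(G w - (\<integral>v. G v \<partial>M))\<^sup>2 = (- (1 / eps) * (\<Sum>i<P. g i (w i) - p i))\<^sup>2" by simp
    also have "\<dots> = (1 / eps)\<^sup>2 * ((\<Sum>i<P. g i (w i) - p i) * (\<Sum>j<P. g j (w j) - p j))"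
      by (simp add: power2_eq_square)
    also have "(\<Sum>i<P. g i (w i) - p i) * (\<Sum>j<P. g j (w j) - p j) = (\<Sum>i<P. \<Sum>j<P. (g i (w i) - p i) * (g j (w j) - p j))"
      by (rule sum_product)
    finally show ?thesis .
  qed
  have VG: "(\<integral>w. (G w - (\<integral>v. G v \<partial>M))\<^sup>2 \<partial>M) = (1 / eps)\<^sup>2 * (\<Sum>i<P. p i - (p i)\<^sup>2)"
  proof -
    have "(\<integral>w. (G w - (\<integral>v. G v \<partial>M))\<^sup>2 \<partial>M)
        = (1 / eps)\<^sup>2 * (\<Sum>i<P. \<Sum>j<P. (\<integral>w. (g i (w i) - p i) * (g j (w j) - p j) \<partial>M))"
    proof -
      have "(\<integral>w. (\<Sum>i<P. \<Sum>j<P. (g i (w i) - p i) * (g j (w j) - p j)) \<partial>M)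
          = (\<Sum>i<P. (\<integral>w. (\<Sum>j<P. (g i (w i) - p i) * (g j (w j) - p j)) \<partial>M))"
        by (rule Bochner_Integration.integral_sum) (auto intro!: integrable_sum intM2)
      also have "\<dots> = (\<Sum>i<P. \<Sum>j<P. (\<integral>w. (g i (w i) - p i) * (g j (w j) - p j) \<partial>M))"
        by (intro sum.cong refl Bochner_Integration.integral_sum) (auto intro!: intM2)
      finally show ?thesis unfolding sqexp by simp
    qed
    also have "\<dots> = (1 / eps)\<^sup>2 * (\<Sum>i<P. \<Sum>j<P. (if i = j then p i - (p i)\<^sup>2 else 0))"
      using EXX by simp
    also have "\<dots> = (1 / eps)\<^sup>2 * (\<Sum>i<P. p i - (p i)\<^sup>2)"
      by (simp add: sum.delta)
    finally show ?thesis .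
  qed
  have part2: "(1 / eps)\<^sup>2 * (\<Sum>i<P. p i - (p i)\<^sup>2) = 1 / (2 * eps) * (\<Sum>i<P. phi_fd \<sigma> (\<mu>0 i) lam eps / eps)
             - (1/4) * (\<Sum>i<P. (phi_fd \<sigma> (\<mu>0 i) lam eps / eps)\<^sup>2)"
  proof -
    have "(1 / eps)\<^sup>2 * (\<Sum>i<P. p i - (p i)\<^sup>2) = (\<Sum>i<P. (1 / eps)\<^sup>2 * (p i - (p i)\<^sup>2))"
      by (simp add: sum_distrib_left)
    also have "\<dots> = (\<Sum>i<P. 1 / (2 * eps) * (phi_fd \<sigma> (\<mu>0 i) lam eps / eps)
             - (1/4) * (phi_fd \<sigma> (\<mu>0 i) lam eps / eps)\<^sup>2)"
      using e by (intro sum.cong refl) (simp add: p_def power2_eq_square field_simps)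
    also have "\<dots> = 1 / (2 * eps) * (\<Sum>i<P. phi_fd \<sigma> (\<mu>0 i) lam eps / eps)
             - (1/4) * (\<Sum>i<P. (phi_fd \<sigma> (\<mu>0 i) lam eps / eps)\<^sup>2)"
      by (simp add: sum_subtractf sum_distrib_left)
    finally show ?thesis .
  qed
  show ?thesis unfolding gn using EG part1 VG part2 by simp
qed


end
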